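(* Let $f_1,f_2$ be strongly hyperbolic functions, $p=(x_p,y_p)\in\mathbb{R}^2$, $s<0$, and let $q\in\mathcal{P}$ be a point not parallel to $p$. Then exactly one of the following holds: (1) there exists $t\in\mathbb{R}$ such that $\overline{l_{s,t}}$ contains $p$ and $q$; (2) there exist $a_1>0$, $b_1,c_1\in\mathbb{R}$ such that $\overline{f_{a_1,b_1,c_1}}$ contains $p$ and $q$ and $f'_{a_1,b_1,c_1}(x_p)=s$.
   Context: Identify $\mathbb{S}^1$ with $\mathbb{R}\cup\{\infty\}$, $\mathcal{P}=\mathbb{S}^1\times\mathbb{S}^1$, $\mathbb{R}^+=(0,\infty)$. Two points of $\mathcal{P}$ are parallel if they have the same first coordinate or the same second coordinate. A function $f:\mathbb{R}^+\to\mathbb{R}^+$ is strongly hyperbolic if: (1) $\lim_{x\to0+}f(x)=+\infty$, $\lim_{x\to+\infty}f(x)=0$; (2) $f$ strictly convex; (3) $\lim_{x\to+\infty}f(x+b)/f(x)=1$ for each $b\in\mathbb{R}$; (4) $f$ differentiable; (5) $\ln|f'|$ strictly convex. For $a>0$, $b,c\in\mathbb{R}$: $f_{a,b,c}:\mathbb{R}\setminus\{-b\}\to\mathbb{R}$, $f_{a,b,c}(x)=af_1(x+b)+c$ for $x>-b$, $f_{a,b,c}(x)=-af_2(-x-b)+c$ for $x<-b$; $\overline{f_{a,b,c}}=\{(x,f_{a,b,c}(x)):x\ne-b\}\cup\{(-b,\infty),(\infty,c)\}$; for $s,t\in\mathbb{R}$, $\overline{l_{s,t}}=\{(x,sx+t):x\in\mathbb{R}\}\cup\{(\infty,\infty)\}$.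 *)

theory Defs
  imports "HOL-Analysis.Analysis"
begin

text \<open>The circle S^1 = R \<union> {\<infinity>}: Fin r for r real, and Infty.\<close>
datatype ext = Fin real | Infty

type_synonym point = "ext \<times> ext"

definition parallel :: "point \<Rightarrow> point \<Rightarrow> bool" where
  "parallel p q \<longleftrightarrow> fst p = fst q \<or> snd p = snd q"

definition strictly_convex_on :: "real set \<Rightarrow> (real \<Rightarrow> real) \<Rightarrow> bool" where
  "strictly_convex_on S f \<longleftrightarrow> convex S \<and>
     (\<forall>x\<in>S. \<forall>y\<in>S. x \<noteq> y \<longrightarrow> (\<forall>u::real. 0 < u \<and> u < 1 \<longrightarrow>
        f (u * x + (1 - u) * y) < u * f x + (1 - u) * f y))"

text \<open>Strongly hyperbolic functions R^+ \<rightarrow> R^+ (only values on (0,\<infinity>) matter).\<close>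
definition strongly_hyperbolic :: "(real \<Rightarrow> real) \<Rightarrow> bool" where
  "strongly_hyperbolic f \<longleftrightarrow>
     (\<forall>x>0. f x > 0) \<and>
     filterlim f at_top (at_right 0) \<and>
     (f \<longlongrightarrow> 0) at_top \<and>
     strictly_convex_on {0<..} f \<and>
     (\<forall>b::real. ((\<lambda>x. f (x + b) / f x) \<longlongrightarrow> 1) at_top) \<and>
     (\<forall>x>0. f differentiable (at x)) \<and>
     strictly_convex_on {0<..} (\<lambda>x. ln \<bar>deriv f x\<bar>)"

text \<open>f_{a,b,c}; the value at x = -b is irrelevant (set to 0).\<close>
definition fabc :: "(real \<Rightarrow> real) \<Rightarrow> (real \<Rightarrow> real) \<Rightarrow> real \<Rightarrow> real \<Rightarrow> real \<Rightarrow> real \<Rightarrow> real" where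
  "fabc f1 f2 a b c x =
     (if x > -b then a * f1 (x + b) + c
      else if x < -b then - a * f2 (- x - b) + c
      else 0)"

definition fabc_bar :: "(real \<Rightarrow> real) \<Rightarrow> (real \<Rightarrow> real) \<Rightarrow> real \<Rightarrow> real \<Rightarrow> real \<Rightarrow> point set" where
  "fabc_bar f1 f2 a b c =
     {(Fin x, Fin (fabc f1 f2 a b c x)) | x. x \<noteq> -b} \<union> {(Fin (-b), Infty), (Infty, Fin c)}"

definition line_bar :: "real \<Rightarrow> real \<Rightarrow> point set" where
  "line_bar s t = {(Fin x, Fin (s * x + t)) | x. True} \<union> {(Infty, Infty)}"

end

theory Submission imports Defs begin


lemma ivt_int:
  fixes g :: "real \<Rightarrow> real"
  assumes "continuous_on I g" "is_interval I" "a \<in> I" "b \<in> I" "g a < t" "t < g b"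
  shows "\<exists>x\<in>I. g x = t"
proof (cases "a \<le> b")
  case True
  have sub: "{a..b} \<subseteq> I" using assms(2-4) unfolding is_interval_1 atLeastAtMost_iff subset_iff by blast
  obtain x where "a \<le> x" "x \<le> b" "g x = t"
    using IVT'[of g a t b] True assms continuous_on_subset[OF assms(1) sub] by force
  thus ?thesis using sub by auto
next
  case False
  have sub: "{b..a} \<subseteq> I" using assms(2-4) unfolding is_interval_1 atLeastAtMost_iff subset_iff by blast
  obtain x where "b \<le> x" "x \<le> a" "g x = t"
    using IVT2'[of g a t b] False assms continuous_on_subset[OF assms(1) sub] by force
  thus ?thesis using sub by auto
qed

lemma ev_pt: assumes "eventually P (at_right (0::real))" "b > 0" shows "\<exists>v. 0 < v \<and> v < b \<and> P v"
proof -
  obtain c where c: "c > 0" "\<And>y. y > 0 \<Longrightarrow> y < c \<Longrightarrow> P y"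
    using assms(1) unfolding eventually_at_right_field by auto
  show ?thesis using c assms(2) by (intro exI[of _ "min b c / 2"]) auto
qed

locale sh =
  fixes f :: "real \<Rightarrow> real"
  assumes SH: "strongly_hyperbolic f"
begin

lemma pos: "x > 0 \<Longrightarrow> f x > 0"
  using SH unfolding strongly_hyperbolic_def by auto

lemma lim0: "filterlim f at_top (at_right 0)"
  using SH unfolding strongly_hyperbolic_def by auto

lemma liminf: "(f \<longlongrightarrow> 0) at_top"
  using SH unfolding strongly_hyperbolic_def by auto

lemma ratio: "((\<lambda>x. f (x + b) / f x) \<longlongrightarrow> 1) at_top"
  using SH unfolding strongly_hyperbolic_def by auto

lemma scvx: "strictly_convex_on {0<..} f"
  using SH unfolding strongly_hyperbolic_def by auto

lemma slcvx: "strictly_convex_on {0<..} (\<lambda>x. ln \<bar>deriv f x\<bar>)"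
  using SH unfolding strongly_hyperbolic_def by auto

lemma D: "x > 0 \<Longrightarrow> (f has_real_derivative deriv f x) (at x)"
  using SH unfolding strongly_hyperbolic_def by (simp add: DERIV_deriv_iff_real_differentiable)

lemma cont: "x > 0 \<Longrightarrow> isCont f x"
  using D DERIV_isCont by blast

lemma H: "x > 0 \<Longrightarrow> y > 0 \<Longrightarrow> x \<noteq> y \<Longrightarrow> 0 < u \<Longrightarrow> u < 1 \<Longrightarrow>
   f (u * x + (1 - u) * y) < u * f x + (1 - u) * f y"
  using scvx unfolding strictly_convex_on_def by auto

lemma cvx: "convex_on {0<..} f"
proof (rule convex_onI)
  fix t x y :: real assume t: "0 < t" "t < 1" and xy: "x \<in> {0<..}" "y \<in> {0<..}"
  show "f ((1 - t) *\<^sub>R x + t *\<^sub>R y) \<le> (1 - t) * f x + t * f y"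
  proof (cases "x = y")
    case True thus ?thesis by (simp add: algebra_simps)
  next
    case False
    with H[of x y "1-t"] t xy show ?thesis by simp
  qed
qed auto

lemma tangent: assumes "x > 0" "y > 0" shows "f y - f x \<ge> deriv f x * (y - x)"
  using convex_on_imp_above_tangent[OF cvx, of x y "deriv f x"] assms D[OF assms(1)]
  by (auto simp: has_field_derivative_at_within interior_open)

lemma stangent: assumes "x > 0" "y > 0" "x \<noteq> y" shows "f y - f x > deriv f x * (y - x)"
proof -
  let ?z = "(x + y) / 2"
  have "f ((1/2) * x + (1 - 1/2) * y) < (1/2) * f x + (1 - 1/2) * f y"
    using H[of x y "1/2"] assms by auto
  hence "f ?z < (f x + f y) / 2" by (simp add: field_simps)
  moreover have "f ?z - f x \<ge> deriv f x * (?z - x)" using tangent[of x ?z] assms by auto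
  moreover have "?z - x = (y - x) / 2" by simp
  ultimately show ?thesis by (simp add: field_simps)
qed

lemma dneg: assumes "x > 0" shows "deriv f x < 0"
proof (rule ccontr)
  assume "\<not> deriv f x < 0"
  hence *: "\<And>y. y > x \<Longrightarrow> f y > f x"
    using stangent[OF assms] assms by (smt (verit) mult_nonneg_nonneg)
  have "\<forall>\<^sub>F y in at_top. f y < f x" using liminf pos[OF assms] by (simp add: order_tendstoD(2))
  then obtain N where "\<And>y. y \<ge> N \<Longrightarrow> f y < f x" by (auto simp: eventually_at_top_linorder)
  hence "f (max N (x+1)) < f x" by simp
  thus False using *[of "max N (x+1)"] by linarith
qed

lemma dmono: assumes "0 < x" "x \<le> y" shows "deriv f x \<le> deriv f y"
proof (cases "x = y")
  case False
  hence "x < y" using assms by auto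
  have "f y - f x \<ge> deriv f x * (y - x)" "f x - f y \<ge> deriv f y * (x - y)"
    using tangent assms by auto
  hence "deriv f x * (y - x) \<le> deriv f y * (y - x)" by (simp add: algebra_simps)
  thus ?thesis using \<open>x < y\<close> by simp
qed simp

lemma dcont: assumes x: "x > 0" shows "isCont (deriv f) x"
proof -
  define Q where "Q h = (f (x + h) - f x) / h" for h
  define R where "R h = (f (x + 2*h) - f (x + h)) / h" for h
  have Q: "(Q \<longlongrightarrow> deriv f x) (at 0)" using D[OF x] unfolding DERIV_def Q_def .
  have "((\<lambda>h::real. 2*h) \<longlongrightarrow> 2*0) (at 0)" by (intro tendsto_intros)
  hence "filterlim (\<lambda>h::real. 2*h) (at 0) (at 0)"
    by (auto simp: filterlim_at eventually_at intro!: exI[of _ 1])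
  hence Q2: "((\<lambda>h. Q (2*h)) \<longlongrightarrow> deriv f x) (at 0)" using filterlim_compose[OF Q] by blast
  have "((\<lambda>h. 2 * Q (2*h) - Q h) \<longlongrightarrow> 2 * deriv f x - deriv f x) (at 0)"
    by (intro tendsto_intros Q Q2)
  moreover have "\<forall>\<^sub>F h in at 0. 2 * Q (2*h) - Q h = R h"
    by (auto simp: eventually_at Q_def R_def field_simps intro!: exI[of _ 1])
  ultimately have R: "(R \<longlongrightarrow> deriv f x) (at 0)" by (simp add: tendsto_cong)
  have key: "norm (deriv f (x + h) - deriv f x) \<le> \<bar>R h - deriv f x\<bar>"
    if h: "h \<noteq> 0 \<and> dist h 0 < x / 2" for h
  proof -
    from h have p1: "x + h > 0" "x + 2*h > 0" by (auto simp: dist_real_def)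
    have tg: "f (x + 2*h) - f (x + h) \<ge> deriv f (x + h) * h"
      using tangent[OF p1] by simp
    show "norm (deriv f (x + h) - deriv f x) \<le> \<bar>R h - deriv f x\<bar>"
    proof (cases "h > 0")
      case True
      hence "deriv f x \<le> deriv f (x+h)" using dmono x by simp
      moreover have "deriv f (x+h) \<le> R h" using tg True by (simp add: R_def field_simps)
      ultimately show ?thesis by simp
    next
      case False
      hence "h < 0" using h by simp
      hence "deriv f (x+h) \<le> deriv f x" using dmono p1 by simp
      moreover have "deriv f (x+h) \<ge> R h" using tg \<open>h < 0\<close> by (simp add: R_def field_simps)
      ultimately show ?thesis by simp
    qed
  qed
  have "\<forall>\<^sub>F h in at 0. norm (deriv f (x + h) - deriv f x) \<le> \<bar>R h - deriv f x\<bar>"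
    unfolding eventually_at using x key by (intro exI[of _ "x/2"]) auto
  moreover have "((\<lambda>h. \<bar>R h - deriv f x\<bar>) \<longlongrightarrow> 0) (at 0)"
    using R by (simp add: tendsto_rabs_zero_iff LIM_zero_iff)
  ultimately have "((\<lambda>h. deriv f (x + h) - deriv f x) \<longlongrightarrow> 0) (at 0)"
    by (rule Lim_null_comparison)
  thus ?thesis by (simp add: isCont_iff LIM_zero_iff)
qed

lemma Pinf: "filterlim (\<lambda>u. - deriv f u) at_top (at_right 0)"
proof (rule filterlim_at_top_mono)
  show "filterlim (\<lambda>u. f u - f 1) at_top (at_right 0)"
    using filterlim_tendsto_add_at_top[OF tendsto_const lim0, of "- f 1"] by simp
  have "f u - f 1 \<le> - deriv f u" if "0 < u" "u < 1" for u
  proof -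
    have "f 1 - f u \<ge> deriv f u * (1 - u)" using tangent that by simp
    moreover have "- deriv f u * (1 - u) \<le> - deriv f u" using dneg[of u] that
      by (simp add: mult_left_le)
    ultimately show ?thesis by linarith
  qed
  thus "\<forall>\<^sub>F u in at_right 0. f u - f 1 \<le> - deriv f u"
    unfolding eventually_at_right_field by (intro exI[of _ 1]) auto
qed

lemma fP0: "((\<lambda>u. f u / (- deriv f u)) \<longlongrightarrow> 0) (at_right 0)"
proof (rule order_tendstoI)
  fix a :: real assume "a < 0"
  show "\<forall>\<^sub>F u in at_right 0. a < f u / (- deriv f u)"
  proof -
    have "a < f y / (- deriv f y)" if "0 < y" for y
    proof -
      have "f y / (- deriv f y) > 0" using pos[OF that] dneg[OF that] by (simp add: divide_pos_neg)
      thus ?thesis using \<open>a < 0\<close> by linarith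
    qed
    thus ?thesis unfolding eventually_at_right_field by (intro exI[of _ 1]) auto
  qed
next
  fix e :: real assume e: "e > 0"
  define v where "v = e / 2"
  have v: "v > 0" using e by (simp add: v_def)
  have ev1: "\<forall>\<^sub>F u in at_right 0. 2 * f v / e < - deriv f u"
    using Pinf by (simp add: filterlim_at_top_dense)
  have ev2: "\<forall>\<^sub>F u in at_right 0. u < v \<and> u > 0"
    unfolding eventually_at_right_field using v by (intro exI[of _ v]) auto
  show "\<forall>\<^sub>F u in at_right 0. f u / (- deriv f u) < e"
    using ev1 ev2
  proof eventually_elim
    case (elim u)
    hence u: "0 < u" "u < v" and P: "2 * f v / e < - deriv f u" by auto
    have Ppos: "- deriv f u > 0" using dneg[OF u(1)] by simp
    have "f v - f u \<ge> deriv f u * (v - u)" using tangent u v by simp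
    moreover have "deriv f u * u < 0" using Ppos u by (simp add: mult_neg_pos)
    ultimately have "f u \<le> f v + (- deriv f u) * v"
      by (simp add: algebra_simps)
    hence "f u / (- deriv f u) \<le> f v / (- deriv f u) + v" using Ppos
      by (simp add: field_simps)
    moreover have "f v / (- deriv f u) < e / 2"
      using P Ppos e by (simp add: field_simps)
    ultimately show ?case unfolding v_def by linarith
  qed
qed

lemma Hl: "x > 0 \<Longrightarrow> y > 0 \<Longrightarrow> x \<noteq> y \<Longrightarrow> 0 < w \<Longrightarrow> w < 1 \<Longrightarrow>
   ln \<bar>deriv f (w * x + (1 - w) * y)\<bar> < w * ln \<bar>deriv f x\<bar> + (1 - w) * ln \<bar>deriv f y\<bar>"
  using slcvx unfolding strictly_convex_on_def by auto

lemma rho_bounds: assumes "u > 0" "D > 0"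
  shows "deriv f (u + D) / deriv f u > 0" "deriv f (u + D) / deriv f u \<le> 1"
proof -
  have a: "deriv f u < 0" "deriv f (u+D) < 0" using dneg assms by auto
  have b: "deriv f u \<le> deriv f (u + D)" using dmono assms by auto
  show "deriv f (u + D) / deriv f u > 0" using a by (simp add: divide_neg_neg)
  show "deriv f (u + D) / deriv f u \<le> 1" using a b by (simp add: divide_le_eq)
qed

lemma rho_mono: assumes "0 < u" "u < v" "D > 0"
  shows "deriv f (u + D) / deriv f u < deriv f (v + D) / deriv f v"
proof -
  define L where "L = v + D - u"
  define t where "t = D / L"
  have L: "L > 0" "D < L" using assms by (auto simp: L_def)
  have t: "0 < t" "t < 1" using L assms by (auto simp: t_def)
  have tL: "t * L = D" using L by (simp add: t_def)
  have "t * (v + D) + (1 - t) * u = u + t * L" by (simp add: L_def algebra_simps)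
  hence e1: "t * (v + D) + (1 - t) * u = u + D" using tL by simp
  have "t * u + (1 - t) * (v + D) = v + D - t * L" by (simp add: L_def algebra_simps)
  hence e2: "t * u + (1 - t) * (v + D) = v" using tL by simp
  have "ln \<bar>deriv f (t * (v + D) + (1 - t) * u)\<bar> < t * ln \<bar>deriv f (v+D)\<bar> + (1 - t) * ln \<bar>deriv f u\<bar>"
    using Hl[of "v+D" u t] assms t by auto
  moreover have "ln \<bar>deriv f (t * u + (1 - t) * (v + D))\<bar> < t * ln \<bar>deriv f u\<bar> + (1 - t) * ln \<bar>deriv f (v+D)\<bar>"
    using Hl[of u "v+D" t] assms t by auto
  moreover have "t * ln \<bar>deriv f (v+D)\<bar> + (1 - t) * ln \<bar>deriv f u\<bar> + (t * ln \<bar>deriv f u\<bar> + (1 - t) * ln \<bar>deriv f (v+D)\<bar>)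
     = ln \<bar>deriv f u\<bar> + ln \<bar>deriv f (v + D)\<bar>" by algebra
  ultimately have "ln \<bar>deriv f (u + D)\<bar> + ln \<bar>deriv f v\<bar> < ln \<bar>deriv f u\<bar> + ln \<bar>deriv f (v + D)\<bar>"
    unfolding e1 e2 by linarith
  moreover have nz: "deriv f (u + D) \<noteq> 0" "deriv f v \<noteq> 0" "deriv f u \<noteq> 0" "deriv f (v + D) \<noteq> 0"
    using dneg assms by (smt (verit))+
  ultimately have "ln (\<bar>deriv f (u + D)\<bar> * \<bar>deriv f v\<bar>) < ln (\<bar>deriv f u\<bar> * \<bar>deriv f (v + D)\<bar>)"
    by (simp add: ln_mult)
  hence "\<bar>deriv f (u + D)\<bar> * \<bar>deriv f v\<bar> < \<bar>deriv f u\<bar> * \<bar>deriv f (v + D)\<bar>"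
    using nz by (simp add: ln_less_cancel_iff)
  moreover have "deriv f u < 0" "deriv f v < 0" "deriv f (u + D) < 0" "deriv f (v + D) < 0"
    using dneg assms by auto
  ultimately show ?thesis by (simp add: field_simps)
qed

lemma rho_exists: assumes "D > 0" "k < 1" shows "\<exists>u0>0. deriv f (u0 + D) / deriv f u0 > k"
proof (rule ccontr)
  assume "\<not> ?thesis"
  hence le: "\<And>u. u > 0 \<Longrightarrow> deriv f (u + D) / deriv f u \<le> k" by auto
  have "k > 0" using le[of 1] rho_bounds[of 1 D] assms by simp
  define h where "h u = f (u + D) - k * f u" for u
  have hmono: "h u \<le> h w" if "0 < u" "u \<le> w" for u w
  proof (rule DERIV_nonneg_imp_nondecreasing[OF that(2)])
    fix x assume x: "u \<le> x" "x \<le> w"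
    hence xp: "x > 0" using that by simp
    have "(h has_real_derivative deriv f (x + D) - k * deriv f x) (at x)"
    proof -
      have "((\<lambda>z. f (z + D)) has_real_derivative deriv f (x + D)) (at x)"
        using D[of "x + D"] xp assms by (simp add: DERIV_shift)
      thus ?thesis unfolding h_def using D[OF xp]
        by (auto intro!: derivative_eq_intros)
    qed
    moreover have "deriv f (x + D) - k * deriv f x \<ge> 0"
    proof -
      have "deriv f (x + D) / deriv f x \<le> k" using le xp by simp
      thus ?thesis using dneg[OF xp] by (simp add: divide_le_eq algebra_simps)
    qed
    ultimately show "\<exists>y. (h has_real_derivative y) (at x) \<and> 0 \<le> y" by blast
  qed
  have "filterlim (\<lambda>x. D + x) at_top at_top"
    by (rule filterlim_tendsto_add_at_top[OF tendsto_const filterlim_ident])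
  hence sh: "filterlim (\<lambda>x. x + D) at_top at_top" by (simp add: add.commute)
  have hlim: "(h \<longlongrightarrow> 0 - k * 0) at_top"
    unfolding h_def using liminf
    by (intro tendsto_intros filterlim_compose[OF liminf sh])
  have hle: "h u \<le> 0" if "u > 0" for u
  proof -
    have "\<forall>\<^sub>F w in at_top. h u \<le> h w"
      using hmono that by (auto simp: eventually_at_top_linorder intro!: exI[of _ u])
    from tendsto_lowerbound[OF hlim this] show ?thesis by simp
  qed
  have "\<forall>\<^sub>F u in at_top. f (u + D) / f u > k" using ratio[of D] assms order_tendstoD(1) by blast
  moreover have "\<forall>\<^sub>F u in at_top. u > (0::real)" by (rule eventually_gt_at_top)
  ultimately have "\<forall>\<^sub>F u in at_top. f (u + D) / f u > k \<and> u > 0" by (rule eventually_conj)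
  then obtain N where N: "\<And>u. u \<ge> N \<Longrightarrow> f (u + D) / f u > k \<and> u > 0"
    by (auto simp: eventually_at_top_linorder)
  define u where "u = N"
  have u: "f (u + D) / f u > k" "u > 0" using N[of N] by (auto simp: u_def)
  hence "h u \<le> 0" using hle by simp
  hence "f (u + D) \<le> k * f u" by (simp add: h_def)
  thus False using u pos[of u] by (simp add: pos_less_divide_eq)
qed

lemma rho_lim: assumes "D > 0" shows "((\<lambda>u. deriv f (u + D) / deriv f u) \<longlongrightarrow> 1) at_top"
proof (rule order_tendstoI)
  fix a :: real assume "a < 1"
  then obtain u0 where u0: "u0 > 0" "deriv f (u0 + D) / deriv f u0 > a" using rho_exists assms by blast
  have "deriv f (u + D) / deriv f u > a" if "u \<ge> u0" for u
    using rho_mono[of u0 u D] u0 that assms by (cases "u = u0") auto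
  thus "\<forall>\<^sub>F u in at_top. deriv f (u + D) / deriv f u > a"
    by (auto simp: eventually_at_top_linorder)
next
  fix a :: real assume "a > 1"
  have "deriv f (u + D) / deriv f u < a" if "u \<ge> 1" for u
    using rho_bounds(2)[of u D] that assms \<open>a > 1\<close> by simp
  thus "\<forall>\<^sub>F u in at_top. deriv f (u + D) / deriv f u < a"
    by (auto simp: eventually_at_top_linorder)
qed

lemma decr: assumes "0 < x" "x < y" shows "f y < f x"
proof -
  have "f x - f y > deriv f y * (x - y)" using stangent[of y x] assms by auto
  moreover have "deriv f y * (x - y) > 0" using dneg[of y] assms by (simp add: mult_neg_neg)
  ultimately show ?thesis by simp
qed

lemma contfP: "continuous_on {0<..} (\<lambda>u. h u / (- deriv f u))" if "\<And>u. u > 0 \<Longrightarrow> isCont h u"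
proof (intro continuous_at_imp_continuous_on ballI)
  fix u :: real assume "u \<in> {0<..}"
  hence u: "u > 0" by simp
  show "isCont (\<lambda>u. h u / (- deriv f u)) u"
    using that[OF u] dcont[OF u] dneg[OF u] by (intro continuous_intros) auto
qed

lemma LB: assumes "t > 0" shows "\<exists>u>0. f u / (- deriv f u) = t"
proof -
  have "\<forall>\<^sub>F u in at_right 0. f u / (- deriv f u) < t" using fP0 assms order_tendstoD(2) by blast
  then obtain a where a: "a > 0" "f a / (- deriv f a) < t" using ev_pt[of _ 1] by auto
  obtain u0 where u0: "u0 > 0" "deriv f (u0 + 2*t) / deriv f u0 > 1/2" using rho_exists[of "2*t" "1/2"] assms by auto
  have "f u0 - f (u0 + 2*t) \<ge> deriv f (u0 + 2*t) * (u0 - (u0 + 2*t))" using tangent[of "u0 + 2*t" u0] u0 assms by simp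
  hence "f u0 > - deriv f (u0 + 2*t) * (2*t)" using pos[of "u0 + 2*t"] u0 assms by simp
  moreover have "- deriv f (u0 + 2*t) > (1/2) * (- deriv f u0)"
    using u0 dneg[OF u0(1)] by (simp add: less_divide_eq)
  moreover have "- deriv f (u0 + 2*t) * (2*t) > ((1/2) * (- deriv f u0)) * (2*t)"
    using mult_strict_right_mono[OF calculation(2)] assms by simp
  ultimately have "f u0 > t * (- deriv f u0)" by (simp add: algebra_simps)
  moreover have Ppos: "- deriv f u0 > 0" using dneg[OF u0(1)] by simp
  ultimately have b: "f u0 / (- deriv f u0) > t" by (subst pos_less_divide_eq[OF Ppos]) linarith
  have c: "continuous_on {0<..} (\<lambda>u. f u / (- deriv f u))"
    using contfP cont by blast
  have "is_interval {0::real<..}" by (simp add: is_interval_ci)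
  thus ?thesis using ivt_int[OF c _ _ _ a(2) b] a u0 by auto
qed

lemma contsh: "x + c > 0 \<Longrightarrow> isCont (\<lambda>u. f (u + c)) x"
  using D[of "x + c"] by (simp add: DERIV_shift DERIV_isCont)

lemma LA: assumes "D > 0" "0 < t" "t < D" shows "\<exists>u>0. (f u - f (u + D)) / (- deriv f u) = t"
proof -
  have "\<forall>\<^sub>F u in at_right 0. f u / (- deriv f u) < t" using fP0 assms order_tendstoD(2) by blast
  then obtain a where a: "a > 0" "f a / (- deriv f a) < t" using ev_pt[of _ 1] by auto
  have Pa: "- deriv f a > 0" using dneg[OF a(1)] by simp
  have "f a - f (a + D) < f a" using pos[of "a + D"] a assms by simp
  hence "(f a - f (a + D)) / (- deriv f a) < f a / (- deriv f a)" by (rule divide_strict_right_mono[OF _ Pa])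
  with a have a2: "(f a - f (a + D)) / (- deriv f a) < t" by linarith
  obtain u0 where u0: "u0 > 0" "deriv f (u0 + D) / deriv f u0 > t / D" using rho_exists[of D "t/D"] assms by auto
  have P0: "- deriv f u0 > 0" using dneg[OF u0(1)] by simp
  have "f u0 - f (u0 + D) \<ge> deriv f (u0 + D) * (u0 - (u0 + D))" using tangent[of "u0 + D" u0] u0 assms by simp
  hence n1: "f u0 - f (u0 + D) \<ge> (- deriv f (u0 + D)) * D" by simp
  have "(- deriv f (u0 + D)) / (- deriv f u0) > t / D" using u0 by simp
  hence "(- deriv f (u0 + D)) > t / D * (- deriv f u0)" by (simp only: pos_less_divide_eq[OF P0])
  hence "(- deriv f (u0 + D)) * D > t / D * (- deriv f u0) * D"
    by (rule mult_strict_right_mono) (use assms in simp)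
  moreover have "t / D * (- deriv f u0) * D = t * (- deriv f u0)" using assms by simp
  ultimately have "(- deriv f (u0 + D)) * D > t * (- deriv f u0)" by linarith
  with n1 have "f u0 - f (u0 + D) > t * (- deriv f u0)" by linarith
  hence b: "(f u0 - f (u0 + D)) / (- deriv f u0) > t" by (subst pos_less_divide_eq[OF P0]) linarith
  have c: "continuous_on {0<..} (\<lambda>u. (f u - f (u + D)) / (- deriv f u))"
    using assms by (intro contfP continuous_intros cont contsh) auto
  have "is_interval {0::real<..}" by (simp add: is_interval_ci)
  thus ?thesis using ivt_int[OF c _ _ _ a2 b] a u0 by auto
qed

lemma LC: assumes "D > 0" "t > D" shows "\<exists>u>D. (f (u - D) - f u) / (- deriv f u) = t"
proof -
  have PD: "- deriv f D > 0" using dneg assms by simp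
  have "\<forall>\<^sub>F v in at_right 0. f v > f D + t * (- deriv f D)"
    using lim0 by (simp add: filterlim_at_top_dense)
  then obtain v where v: "0 < v" "v < D" "f v > f D + t * (- deriv f D)" using ev_pt[of _ D] assms by auto
  define a where "a = v + D"
  have a: "a > D" "a - D = v" using v by (auto simp: a_def)
  have Pa: "- deriv f a > 0" using dneg a assms by simp
  have "f a < f D" using decr[of D a] a assms by simp
  moreover have "- deriv f a \<le> - deriv f D" using dmono[of D a] a assms by simp
  hence "t * (- deriv f a) \<le> t * (- deriv f D)" using assms by (simp add: mult_left_mono)
  moreover have "f (a - D) = f v" using a(2) by simp
  ultimately have "f (a - D) - f a > t * (- deriv f a)" using v by linarith
  hence a2: "(f (a - D) - f a) / (- deriv f a) > t" by (subst pos_less_divide_eq[OF Pa]) linarith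
  obtain v0 where v0: "v0 > 0" "deriv f (v0 + D) / deriv f v0 > D / t" using rho_exists[of D "D/t"] assms by auto
  define b where "b = v0 + D"
  have b: "b > D" "b - D = v0" using v0 by (auto simp: b_def)
  have Pb: "- deriv f b > 0" using dneg b assms by simp
  have P0: "- deriv f v0 > 0" using dneg[OF v0(1)] by simp
  have "f b - f v0 \<ge> deriv f v0 * (b - v0)" using tangent[of v0 b] v0 b assms by simp
  moreover have "b - v0 = D" by (simp add: b_def)
  ultimately have n1: "f v0 - f b \<le> (- deriv f v0) * D" by simp
  have "(- deriv f b) / (- deriv f v0) > D / t" using v0 by (simp add: b_def)
  hence "(- deriv f b) > D / t * (- deriv f v0)" by (simp only: pos_less_divide_eq[OF P0])
  hence "t * (- deriv f b) > t * (D / t * (- deriv f v0))"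
    by (rule mult_strict_left_mono) (use assms in simp)
  moreover have "t * (D / t * (- deriv f v0)) = D * (- deriv f v0)" using assms by simp
  ultimately have "t * (- deriv f b) > D * (- deriv f v0)" by linarith
  with n1 have "f (b - D) - f b < t * (- deriv f b)" using b by (simp add: mult.commute)
  hence b2: "(f (b - D) - f b) / (- deriv f b) < t" by (subst pos_divide_less_eq[OF Pb]) linarith
  have c: "continuous_on {D<..} (\<lambda>u. (f (u - D) - f u) / (- deriv f u))"
  proof (intro continuous_at_imp_continuous_on ballI)
    fix u :: real assume "u \<in> {D<..}"
    hence u: "u > D" by simp
    have "isCont (\<lambda>u. f (u + - D)) u" using contsh[of u "-D"] u by simp
    thus "isCont (\<lambda>u. (f (u - D) - f u) / (- deriv f u)) u"
      using u assms dcont[of u] dneg[of u] cont[of u] by (intro continuous_intros) auto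
  qed
  have "is_interval {D<..}" by (simp add: is_interval_ci)
  thus ?thesis using ivt_int[OF c _ _ _ b2 a2] a b by auto
qed

end
lemma LE: assumes f: "sh f" and g: "sh g" and "D > 0" "t > 0"
  shows "\<exists>w. 0 < w \<and> w < D \<and> (g (D - w) + f w) / (- deriv f w) = t"
proof -
  have ev1: "\<forall>\<^sub>F w in at_right 0. - deriv f w > 2 * g (D/2) / t"
    using sh.Pinf[OF f] by (simp add: filterlim_at_top_dense)
  have ev2: "\<forall>\<^sub>F w in at_right 0. f w / (- deriv f w) < t / 2"
    using sh.fP0[OF f] assms order_tendstoD(2) by (metis half_gt_zero)
  obtain a where a: "0 < a" "a < D/2" "- deriv f a > 2 * g (D/2) / t" "f a / (- deriv f a) < t / 2"
    using ev_pt[OF eventually_conj[OF ev1 ev2], of "D/2"] assms by auto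
  have Pa: "- deriv f a > 0" using sh.dneg[OF f a(1)] by simp
  have "g (D - a) < g (D/2)" using sh.decr[OF g, of "D/2" "D - a"] a assms by simp
  moreover have "2 * g (D/2) < t * (- deriv f a)" using a(3) assms by (simp add: pos_divide_less_eq mult.commute)
  ultimately have "g (D - a) < t / 2 * (- deriv f a)" by simp
  hence "g (D - a) / (- deriv f a) < t / 2" by (subst pos_divide_less_eq[OF Pa]) linarith
  moreover have "(g (D - a) + f a) / (- deriv f a) = g (D - a) / (- deriv f a) + f a / (- deriv f a)"
    by (rule add_divide_distrib)
  ultimately have a2: "(g (D - a) + f a) / (- deriv f a) < t" using a(4) by linarith
  have PD: "- deriv f (D/2) > 0" using sh.dneg[OF f, of "D/2"] assms by simp
  have "\<forall>\<^sub>F v in at_right 0. g v > t * (- deriv f (D/2))"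
    using sh.lim0[OF g] by (simp add: filterlim_at_top_dense)
  then obtain v where v: "0 < v" "v < D/2" "g v > t * (- deriv f (D/2))" using ev_pt[of _ "D/2"] assms by auto
  define b where "b = D - v"
  have b: "b > D/2" "b < D" "D - b = v" using v by (auto simp: b_def)
  have Pb: "- deriv f b > 0" using sh.dneg[OF f, of b] b assms by simp
  have "- deriv f b \<le> - deriv f (D/2)" using sh.dmono[OF f, of "D/2" b] b assms by simp
  hence "t * (- deriv f b) \<le> t * (- deriv f (D/2))" using assms by (simp add: mult_left_mono)
  moreover have "f b > 0" using sh.pos[OF f, of b] b assms by simp
  moreover have "g (D - b) = g v" using b by simp
  ultimately have "g (D - b) + f b > t * (- deriv f b)" using v by linarith
  hence b2: "(g (D - b) + f b) / (- deriv f b) > t" by (subst pos_less_divide_eq[OF Pb]) linarith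
  have c: "continuous_on {0<..<D} (\<lambda>w. (g (D - w) + f w) / (- deriv f w))"
  proof (intro continuous_at_imp_continuous_on ballI)
    fix w :: real assume "w \<in> {0<..<D}"
    hence w: "0 < w" "w < D" by auto
    have "isCont (\<lambda>w. g (D - w)) w"
      by (rule isCont_o2[where f="\<lambda>w. D - w" and a=w and g=g]) (use w sh.cont[OF g, of "D - w"] in \<open>auto intro!: continuous_intros\<close>)
    thus "isCont (\<lambda>w. (g (D - w) + f w) / (- deriv f w)) w"
      using w sh.dcont[OF f, of w] sh.dneg[OF f, of w] sh.cont[OF f, of w] by (intro continuous_intros) auto
  qed
  have "is_interval {0<..<D}" by (simp add: is_interval_1)
  thus ?thesis using ivt_int[OF c _ _ _ a2 b2] a b by auto
qed



lemma fabc_R: "x > -b \<Longrightarrow> fabc f1 f2 a b c x = a * f1 (x + b) + c"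
  by (simp add: fabc_def)
lemma fabc_L: "x < -b \<Longrightarrow> fabc f1 f2 a b c x = - a * f2 (- x - b) + c"
  by (simp add: fabc_def)

lemma mem_FF: "(Fin x, Fin y) \<in> fabc_bar f1 f2 a b c \<longleftrightarrow> x \<noteq> -b \<and> y = fabc f1 f2 a b c x"
  by (auto simp: fabc_bar_def)
lemma mem_IF: "(Infty, Fin y) \<in> fabc_bar f1 f2 a b c \<longleftrightarrow> y = c"
  by (auto simp: fabc_bar_def)
lemma mem_FI: "(Fin x, Infty) \<in> fabc_bar f1 f2 a b c \<longleftrightarrow> x = -b"
  by (auto simp: fabc_bar_def)
lemma mem_II: "(Infty, Infty) \<notin> fabc_bar f1 f2 a b c"
  by (auto simp: fabc_bar_def)

lemma lmem_FF: "(Fin x, Fin y) \<in> line_bar s t \<longleftrightarrow> y = s * x + t"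
  by (auto simp: line_bar_def)
lemma lmem_IF: "(Infty, Fin y) \<notin> line_bar s t"
  by (auto simp: line_bar_def)
lemma lmem_FI: "(Fin x, Infty) \<notin> line_bar s t"
  by (auto simp: line_bar_def)
lemma lmem_II: "(Infty, Infty) \<in> line_bar s t"
  by (auto simp: line_bar_def)

lemma deriv_R: assumes "sh f1" "xp + b > 0"
  shows "(fabc f1 f2 a b c has_real_derivative a * deriv f1 (xp + b)) (at xp)"
proof -
  have "((\<lambda>x. f1 (x + b)) has_real_derivative deriv f1 (xp + b)) (at xp)"
    using sh.D[OF assms(1) assms(2)] by (simp add: DERIV_shift)
  hence "((\<lambda>x. a * f1 (x + b) + c) has_real_derivative a * deriv f1 (xp + b)) (at xp)"
    by (auto intro!: derivative_eq_intros)
  thus ?thesis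
    by (rule has_field_derivative_transform_within_open[where S="{-b<..}"]) (use assms in \<open>auto simp: fabc_R\<close>)
qed

lemma deriv_L: assumes "sh f2" "xp + b < 0"
  shows "(fabc f1 f2 a b c has_real_derivative a * deriv f2 (- xp - b)) (at xp)"
proof -
  have "((\<lambda>x. f2 (- x - b)) has_real_derivative deriv f2 (- xp - b) * (-1)) (at xp)"
    using sh.D[OF assms(1), of "- xp - b"] assms(2)
    by (intro DERIV_chain2[where f=f2]) (auto intro!: derivative_eq_intros)
  hence "((\<lambda>x. - a * f2 (- x - b) + c) has_real_derivative a * deriv f2 (- xp - b)) (at xp)"
    by (auto intro!: derivative_eq_intros)
  thus ?thesis
    by (rule has_field_derivative_transform_within_open[where S="{..<-b}"]) (use assms in \<open>auto simp: fabc_L\<close>)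
qed


abbreviation RHS where "RHS f1 f2 xp yp s q \<equiv> (\<exists>a1 b1 c1. a1 > 0 \<and> (Fin xp, Fin yp) \<in> fabc_bar f1 f2 a1 b1 c1 \<and>
              q \<in> fabc_bar f1 f2 a1 b1 c1 \<and>
              (fabc f1 f2 a1 b1 c1 has_real_derivative s) (at xp))"

lemma mkR:
  assumes "sh f1" "s < 0" "u > 0" "q \<in> fabc_bar f1 f2 (s / deriv f1 u) (u - xp) (yp - s / deriv f1 u * f1 u)"
  shows "RHS f1 f2 xp yp s q"
proof (intro exI conjI)
  have d: "deriv f1 u < 0" using sh.dneg[OF assms(1,3)] .
  show "s / deriv f1 u > 0" using d assms(2) by (simp add: divide_neg_neg)
  show "(Fin xp, Fin yp) \<in> fabc_bar f1 f2 (s / deriv f1 u) (u - xp) (yp - s / deriv f1 u * f1 u)"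
    using assms(3) by (simp add: mem_FF fabc_R)
  show "q \<in> fabc_bar f1 f2 (s / deriv f1 u) (u - xp) (yp - s / deriv f1 u * f1 u)" by fact
  show "(fabc f1 f2 (s / deriv f1 u) (u - xp) (yp - s / deriv f1 u * f1 u) has_real_derivative s) (at xp)"
    using deriv_R[OF assms(1), where xp=xp and b="u - xp" and a="s / deriv f1 u" and c="yp - s / deriv f1 u * f1 u"] assms(3) d
    by simp
qed

lemma mkL:
  assumes "sh f2" "s < 0" "w > 0" "q \<in> fabc_bar f1 f2 (s / deriv f2 w) (- xp - w) (yp + s / deriv f2 w * f2 w)"
  shows "RHS f1 f2 xp yp s q"
proof (intro exI conjI)
  have d: "deriv f2 w < 0" using sh.dneg[OF assms(1,3)] .
  show "s / deriv f2 w > 0" using d assms(2) by (simp add: divide_neg_neg)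
  show "(Fin xp, Fin yp) \<in> fabc_bar f1 f2 (s / deriv f2 w) (- xp - w) (yp + s / deriv f2 w * f2 w)"
    using assms(3) by (simp add: mem_FF fabc_L)
  show "q \<in> fabc_bar f1 f2 (s / deriv f2 w) (- xp - w) (yp + s / deriv f2 w * f2 w)" by fact
  show "(fabc f1 f2 (s / deriv f2 w) (- xp - w) (yp + s / deriv f2 w * f2 w) has_real_derivative s) (at xp)"
    using deriv_L[OF assms(1), where xp=xp and b="- xp - w" and a="s / deriv f2 w" and c="yp + s / deriv f2 w * f2 w"] assms(3) d
    by simp
qed

lemma excl:
  assumes f1: "sh f1" and f2: "sh f2" and s: "s < 0" and a: "a > 0"
    and nb: "xp \<noteq> -b" "x \<noteq> -b" and x: "x \<noteq> xp"
    and der: "(fabc f1 f2 a b c has_real_derivative s) (at xp)"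
  shows "fabc f1 f2 a b c x - fabc f1 f2 a b c xp \<noteq> s * (x - xp)"
proof (cases "xp > -b")
  case pR: True
  show ?thesis
  proof (cases "x > -b")
    case True
    have "s = a * deriv f1 (xp + b)" using DERIV_unique[OF der deriv_R[OF f1]] pR by simp
    moreover have "f1 (x + b) - f1 (xp + b) > deriv f1 (xp + b) * ((x + b) - (xp + b))"
      using sh.stangent[OF f1, of "xp + b" "x + b"] pR True x by simp
    hence "a * (f1 (x + b) - f1 (xp + b)) > a * (deriv f1 (xp + b) * (x - xp))"
      using a by simp
    ultimately show ?thesis using pR True by (simp add: fabc_R algebra_simps)
  next
    case False
    hence "x < -b" using nb by simp
    hence "x < xp" using pR by simp
    have "fabc f1 f2 a b c x < c" using \<open>x < -b\<close> a sh.pos[OF f2, of "- x - b"] by (simp add: fabc_L)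
    moreover have "fabc f1 f2 a b c xp > c" using pR a sh.pos[OF f1, of "xp + b"] by (simp add: fabc_R)
    moreover have "s * (x - xp) > 0" using s \<open>x < xp\<close> by (simp add: mult_neg_neg)
    ultimately show ?thesis by linarith
  qed
next
  case False
  hence pL: "xp < -b" using nb by simp
  show ?thesis
  proof (cases "x < -b")
    case True
    have "s = a * deriv f2 (- xp - b)" using DERIV_unique[OF der deriv_L[OF f2]] pL by simp
    moreover have "f2 (- x - b) - f2 (- xp - b) > deriv f2 (- xp - b) * ((- x - b) - (- xp - b))"
      using sh.stangent[OF f2, of "- xp - b" "- x - b"] pL True x by simp
    hence "a * (f2 (- x - b) - f2 (- xp - b)) > a * (deriv f2 (- xp - b) * (xp - x))"
      using a by simp
    ultimately show ?thesis using pL True by (simp add: fabc_L algebra_simps)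
  next
    case False
    hence "x > -b" using nb by simp
    hence "x > xp" using pL by simp
    have "fabc f1 f2 a b c xp < c" using pL a sh.pos[OF f2, of "- xp - b"] by (simp add: fabc_L)
    moreover have "fabc f1 f2 a b c x > c" using \<open>x > -b\<close> a sh.pos[OF f1, of "x + b"] by (simp add: fabc_R)
    moreover have "s * (x - xp) < 0" using s \<open>x > xp\<close> by (simp add: mult_neg_pos)
    ultimately show ?thesis by linarith
  qed
qed


theorem lemma4p12:
  fixes f1 f2 :: "real \<Rightarrow> real" and xp yp s :: real and q :: point
  assumes "strongly_hyperbolic f1" and "strongly_hyperbolic f2"
    and "s < 0"
    and "\<not> parallel (Fin xp, Fin yp) q"
  shows "(\<exists>t. (Fin xp, Fin yp) \<in> line_bar s t \<and> q \<in> line_bar s t)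
     \<longleftrightarrow> \<not> (\<exists>a1 b1 c1. a1 > 0 \<and> (Fin xp, Fin yp) \<in> fabc_bar f1 f2 a1 b1 c1 \<and>
              q \<in> fabc_bar f1 f2 a1 b1 c1 \<and>
              (fabc f1 f2 a1 b1 c1 has_real_derivative s) (at xp))"
proof -
  have f1: "sh f1" and f2: "sh f2" using assms(1,2) by (simp_all add: sh_def)
  have s: "s < 0" by fact
  have pline: "(Fin xp, Fin yp) \<in> line_bar s (yp - s * xp)" by (simp add: lmem_FF)
  consider (II) "q = (Infty, Infty)" | (IF) y where "q = (Infty, Fin y)" "y \<noteq> yp"
    | (FI) x where "q = (Fin x, Infty)" "x \<noteq> xp"
    | (FF) x y where "q = (Fin x, Fin y)" "x \<noteq> xp" "y \<noteq> yp"
    using assms(4) unfolding parallel_def by (cases q; metis ext.exhaust fst_conv snd_conv)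
  thus ?thesis
  proof cases
    case II
    thus ?thesis using pline by (auto simp: lmem_II mem_II)
  next
    case (IF y)
    have "RHS f1 f2 xp yp s q"
    proof (cases "y < yp")
      case True
      have "(yp - y) / (- s) > 0" using True s by (intro divide_pos_pos) auto
      from sh.LB[OF f1 this] obtain u where u: "u > 0" "f1 u / (- deriv f1 u) = (yp - y) / (- s)"
        by blast
      have "deriv f1 u < 0" using sh.dneg[OF f1 u(1)] .
      hence "yp - s / deriv f1 u * f1 u = y" using u(2) s by (simp add: field_simps)
      thus ?thesis using IF by (intro mkR[OF f1 s u(1)]) (simp add: mem_IF)
    next
      case False
      hence "y > yp" using IF by simp
      have "(y - yp) / (- s) > 0" using \<open>y > yp\<close> s by (intro divide_pos_pos) auto
      from sh.LB[OF f2 this] obtain w where w: "w > 0" "f2 w / (- deriv f2 w) = (y - yp) / (- s)"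
        by blast
      have "deriv f2 w < 0" using sh.dneg[OF f2 w(1)] .
      hence "yp + s / deriv f2 w * f2 w = y" using w(2) s by (simp add: field_simps)
      thus ?thesis using IF by (intro mkL[OF f2 s w(1)]) (simp add: mem_IF)
    qed
    thus ?thesis using IF by (simp add: lmem_IF)
  next
    case (FI x)
    have "RHS f1 f2 xp yp s q"
    proof (cases "x < xp")
      case True
      thus ?thesis using FI by (intro mkR[OF f1 s, of "xp - x"]) (simp_all add: mem_FI)
    next
      case False
      hence "x > xp" using FI by simp
      thus ?thesis using FI by (intro mkL[OF f2 s, of "x - xp"]) (simp_all add: mem_FI)
    qed
    thus ?thesis using FI by (simp add: lmem_FI)
  next
    case (FF x y)
    show ?thesis
    proof (cases "y - yp = s * (x - xp)")
      case True
      have "q \<in> line_bar s (yp - s * xp)" using True FF by (simp add: lmem_FF algebra_simps)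
      moreover have "\<not> RHS f1 f2 xp yp s q"
      proof
        assume "RHS f1 f2 xp yp s q"
        then obtain a b c where abc: "a > 0" "(Fin xp, Fin yp) \<in> fabc_bar f1 f2 a b c"
          "q \<in> fabc_bar f1 f2 a b c" "(fabc f1 f2 a b c has_real_derivative s) (at xp)" by blast
        have "xp \<noteq> -b" "yp = fabc f1 f2 a b c xp" using abc(2) by (auto simp: mem_FF)
        moreover have "x \<noteq> -b" "y = fabc f1 f2 a b c x" using abc(3) FF by (auto simp: mem_FF)
        ultimately show False using excl[OF f1 f2 s abc(1) _ _ _ abc(4), of x] FF True by auto
      qed
      ultimately show ?thesis using pline by blast
    next
      case False
      have nl: "\<not> (\<exists>t. (Fin xp, Fin yp) \<in> line_bar s t \<and> q \<in> line_bar s t)"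
        using False FF by (auto simp: lmem_FF algebra_simps)
      define d where "d = x - xp"
      define e where "e = y - yp"
      have de: "d \<noteq> 0" "e \<noteq> 0" "e \<noteq> s * d" using FF False by (auto simp: d_def e_def)
      have xeq: "x = xp + d" and yeq: "y = yp + e" by (auto simp: d_def e_def)
      have q: "q = (Fin (xp + d), Fin (yp + e))" using FF xeq yeq by simp
      have sn: "s \<noteq> 0" using s by simp
      have "RHS f1 f2 xp yp s q"
      proof (cases "d > 0")
        case dpos: True
        show ?thesis
        proof (cases "e > 0")
          case True
          have t: "e / (- s) > 0" using True s by (intro divide_pos_pos) auto
          obtain w where w: "0 < w" "w < d" "(f1 (d - w) + f2 w) / (- deriv f2 w) = e / (- s)"
            using LE[OF f2 f1 dpos t] by blast
          have K: "deriv f2 w \<noteq> 0" using sh.dneg[OF f2 w(1)] by simp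
          have x1: "xp + d > - (- xp - w)" using w by simp
          show ?thesis
          proof (rule mkL[OF f2 s w(1)])
            show "q \<in> fabc_bar f1 f2 (s / deriv f2 w) (- xp - w) (yp + s / deriv f2 w * f2 w)"
              unfolding q mem_FF using x1 K w(3) sn by (simp add: fabc_R field_simps)
          qed
        next
          case False
          hence eneg: "e < 0" using de by simp
          show ?thesis
          proof (cases "e > s * d")
            case True
            have t: "e / s > 0" "e / s < d" using True eneg s by (auto simp: divide_neg_neg neg_divide_less_eq mult.commute)
            obtain u where u: "0 < u" "(f1 u - f1 (u + d)) / (- deriv f1 u) = e / s"
              using sh.LA[OF f1 dpos t] by blast
            have K: "deriv f1 u \<noteq> 0" using sh.dneg[OF f1 u(1)] by simp
            have x1: "xp + d > - (u - xp)" using u dpos by simp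
            show ?thesis
            proof (rule mkR[OF f1 s u(1)])
              show "q \<in> fabc_bar f1 f2 (s / deriv f1 u) (u - xp) (yp - s / deriv f1 u * f1 u)"
                unfolding q mem_FF using x1 K u(2) sn by (simp add: fabc_R field_simps)
            qed
          next
            case False
            hence "e < s * d" using de by simp
            hence t: "e / s > d" using s by (simp add: neg_less_divide_eq mult.commute)
            obtain w where w: "w > d" "(f2 (w - d) - f2 w) / (- deriv f2 w) = e / s"
              using sh.LC[OF f2 dpos t] by blast
            have wp: "w > 0" using w dpos by simp
            have K: "deriv f2 w \<noteq> 0" using sh.dneg[OF f2 wp] by simp
            have x1: "xp + d < - (- xp - w)" using w by simp
            show ?thesis
            proof (rule mkL[OF f2 s wp])
              show "q \<in> fabc_bar f1 f2 (s / deriv f2 w) (- xp - w) (yp + s / deriv f2 w * f2 w)"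
                unfolding q mem_FF using x1 K w(2) sn by (simp add: fabc_L field_simps)
            qed
          qed
        qed
      next
        case False
        hence dneg: "d < 0" using de by simp
        hence Dp: "- d > 0" by simp
        show ?thesis
        proof (cases "e < 0")
          case True
          have t: "e / s > 0" using True s by (simp add: divide_neg_neg)
          obtain u where u: "0 < u" "u < - d" "(f2 (- d - u) + f1 u) / (- deriv f1 u) = e / s"
            using LE[OF f1 f2 Dp t] by blast
          have K: "deriv f1 u \<noteq> 0" using sh.dneg[OF f1 u(1)] by simp
          have x1: "xp + d < - (u - xp)" using u by simp
          have "s * f1 u + e * deriv f1 u + s * f2 (- d - u) = 0" using K u(3) sn by (simp add: field_simps)
          hence E: "deriv f1 u * (s * f1 u + e * deriv f1 u + s * f2 (- d - u)) = 0" by simp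
          show ?thesis
          proof (rule mkR[OF f1 s u(1)])
            show "q \<in> fabc_bar f1 f2 (s / deriv f1 u) (u - xp) (yp - s / deriv f1 u * f1 u)"
              unfolding q mem_FF using x1 K u(3) sn by (simp add: fabc_L field_simps) (use E in \<open>simp add: algebra_simps\<close>)
          qed
        next
          case False
          hence epos: "e > 0" using de by simp
          show ?thesis
          proof (cases "e > s * d")
            case True
            have t: "e / (- s) > - d" using True s by (simp add: neg_divide_less_eq mult.commute)
            obtain u where u: "u > - d" "(f1 (u - - d) - f1 u) / (- deriv f1 u) = e / (- s)"
              using sh.LC[OF f1 Dp t] by blast
            have up: "u > 0" using u dneg by simp
            have K: "deriv f1 u \<noteq> 0" using sh.dneg[OF f1 up] by simp
            have x1: "xp + d > - (u - xp)" using u by simp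
            show ?thesis
            proof (rule mkR[OF f1 s up])
              show "q \<in> fabc_bar f1 f2 (s / deriv f1 u) (u - xp) (yp - s / deriv f1 u * f1 u)"
                unfolding q mem_FF using x1 K u(2) sn by (simp add: fabc_R field_simps)
            qed
          next
            case False
            hence "e < s * d" using de by simp
            have t: "e / (- s) > 0" "e / (- s) < - d" using \<open>e < s * d\<close> epos s
              by (auto simp: neg_less_divide_eq divide_less_eq mult.commute intro!: divide_pos_pos)
            obtain w where w: "0 < w" "(f2 w - f2 (w + - d)) / (- deriv f2 w) = e / (- s)"
              using sh.LA[OF f2 Dp t] by blast
            have K: "deriv f2 w \<noteq> 0" using sh.dneg[OF f2 w(1)] by simp
            have x1: "xp + d < - (- xp - w)" using w dneg by simp
            show ?thesis
            proof (rule mkL[OF f2 s w(1)])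
              show "q \<in> fabc_bar f1 f2 (s / deriv f2 w) (- xp - w) (yp + s / deriv f2 w * f2 w)"
                unfolding q mem_FF using x1 K w(2) sn by (simp add: fabc_L field_simps)
            qed
          qed
        qed
      qed
      thus ?thesis using nl by blast
    qed
  qed
qed

end
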